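(* Let $S$ be a set, let $f:2^S\to 2^S$ be monotonic with respect to $\subseteq$, and let $X\subseteq S$. Then $X$ is supported for $f$ if and only if $X\subseteq f(X)$.
   Context: For a binary relation ${\prec}$ on $X$ and $x\in X$, $\prec^{-1}(x)=\{x'\in X\mid x'\prec x\}$. A pair $(X,\prec)$ is a support ordering for $f$ if $X\subseteq S$, ${\prec}\subseteq X\times X$, and $x\in f(\prec^{-1}(x))$ for every $x\in X$. A set $X\subseteq S$ is supported for $f$ if there is some relation ${\prec}\subseteq X\times X$ such that $(X,\prec)$ is a support ordering for $f$. *)

theory Defs
  imports Main
begin

text \<open>prec^{-1}(x) = {x'. x' prec x}; relations are sets of pairs, (x', x) \<in> R means x' prec x.\<close>
definition pred_set :: "'a rel \<Rightarrow> 'a \<Rightarrow> 'a set" where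
  "pred_set R x = {x'. (x', x) \<in> R}"

definition support_ordering :: "'a set \<Rightarrow> ('a set \<Rightarrow> 'a set) \<Rightarrow> 'a set \<Rightarrow> 'a rel \<Rightarrow> bool" where
  "support_ordering S f X R \<longleftrightarrow>
     X \<subseteq> S \<and> R \<subseteq> X \<times> X \<and> (\<forall>x\<in>X. x \<in> f (pred_set R x))"

definition supported :: "'a set \<Rightarrow> ('a set \<Rightarrow> 'a set) \<Rightarrow> 'a set \<Rightarrow> bool" where
  "supported S f X \<longleftrightarrow> (\<exists>R \<subseteq> X \<times> X. support_ordering S f X R)"

end

theory Submission
  imports Defs
begin

theorem theorem2:
  fixes S :: "'a set" and f :: "'a set \<Rightarrow> 'a set" and X :: "'a set"
  assumes f_maps: "\<And>A. A \<subseteq> S \<Longrightarrow> f A \<subseteq> S"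
    and f_mono: "\<And>A B. A \<subseteq> S \<Longrightarrow> B \<subseteq> S \<Longrightarrow> A \<subseteq> B \<Longrightarrow> f A \<subseteq> f B"
    and X_sub: "X \<subseteq> S"
  shows "supported S f X \<longleftrightarrow> X \<subseteq> f X"
proof
  assume "supported S f X"
  then obtain R where R: "R \<subseteq> X \<times> X" "\<forall>x\<in>X. x \<in> f (pred_set R x)"
    unfolding supported_def support_ordering_def by blast
  show "X \<subseteq> f X"
  proof
    fix x assume x: "x \<in> X"
    have p: "pred_set R x \<subseteq> X" using R(1) unfolding pred_set_def by blast
    have "f (pred_set R x) \<subseteq> f X" using f_mono[OF _ X_sub p] p X_sub by blast
    then show "x \<in> f X" using R(2) x by blast
  qed
next
  assume h: "X \<subseteq> f X"
  have "pred_set (X \<times> X) x = X" if "x \<in> X" for x using that unfolding pred_set_def by blast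
  then have "support_ordering S f X (X \<times> X)"
    unfolding support_ordering_def using h X_sub by auto
  then show "supported S f X" unfolding supported_def by blast
qed

end
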